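(* Let $I$ and $J$ be finitely generated graded right $A$-submodules of $Q_{\mathrm{gr}}(A)$ with structure constants $\{c_i\}_{i\in\mathbb{Z}}$ and $\{d_i\}_{i\in\mathbb{Z}}$ respectively. Then $I\cong J$ as graded right $A$-modules if and only if $c_i=d_i$ for all $i\in\mathbb{Z}$.
   Context: $\Bbbk$ is an algebraically closed field of characteristic $0$; $\sigma$ is the automorphism of $\Bbbk[z]$ (and $\Bbbk(z)$) with $\sigma(z)=z+1$. For $\alpha\in\Bbbk$, $f=z(z+\alpha)$ and $A=A(f)$ is generated by $\Bbbk[z]$, $x$, $y$ with $xz=(z+1)x$, $yz=(z-1)y$, $xy=f$, $yx=\sigma^{-1}(f)$, graded by $\deg x=1,\deg y=-1,\deg z=0$. $Q_{\mathrm{gr}}(A)$ is the graded quotient ring (localization at nonzero homogeneous elements), which equals the skew Laurent ring $\Bbbk(z)[x,x^{-1};\sigma]$ (with $xg=\sigma(g)x$ and $y=x^{-1}f$). Every finitely generated graded right $A$-submodule $I\subseteq Q_{\mathrm{gr}}(A)$ can be written $I=\bigoplus_{i\in\mathbb{Z}}\Bbbk[z]a_ix^i$ with $a_i\in\Bbbk(z)$ nonzero; then $c_i:=a_ia_{i+1}^{-1}$, normalized to be monic, is a polynomial in $\{1,\sigma^i(z),\sigma^i(z+\alpha),\sigma^i(f)\}$. The sequence $\{c_i\}$ is called the structure constants of $I$ (it does not depend on the choice of generators $a_i$). *)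

theory Defs
  imports "HOL-Computational_Algebra.Polynomial_Factorial"
begin

text \<open>The base field k has type 'k::field_char_0; algebraic closedness is an explicit
hypothesis of the theorem.  k(z) is the fraction field 'k poly fract.
An element of Q_gr(A) = k(z)[x,x^-1;sigma] is a finitely supported function
q :: int => 'k poly fract, standing for the sum over i of (q i) x^i.\<close>

type_synonym 'k qel = "int \<Rightarrow> 'k poly fract"

definition alg_closed :: "'k::field itself \<Rightarrow> bool" where
  "alg_closed _ \<longleftrightarrow> (\<forall>p::'k poly. degree p > 0 \<longrightarrow> (\<exists>x. poly p x = 0))"

text \<open>sigma^n on k[z]: p(z) maps to p(z+n).\<close>
definition psh :: "int \<Rightarrow> 'k::field poly \<Rightarrow> 'k poly" where
  "psh n p = pcompose p [:of_int n, 1:]"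

definition fsh :: "int \<Rightarrow> 'k::field poly fract \<Rightarrow> 'k poly fract" where
  "fsh n g = (let pq = (SOME pq. snd pq \<noteq> 0 \<and> g = Fract (fst pq) (snd pq))
              in Fract (psh n (fst pq)) (psh n (snd pq)))"

definition Qgr :: "'k::field qel set" where
  "Qgr = {q. finite {i. q i \<noteq> 0}}"

definition qzero :: "'k::field qel" where "qzero = (\<lambda>_. 0)"

definition qadd :: "'k::field qel \<Rightarrow> 'k qel \<Rightarrow> 'k qel" where
  "qadd p q = (\<lambda>n. p n + q n)"

text \<open>Multiplication in the skew Laurent ring: (g x^i)(h x^j) = g sigma^i(h) x^(i+j).\<close>
definition qmult :: "'k::field qel \<Rightarrow> 'k qel \<Rightarrow> 'k qel" where
  "qmult p q = (\<lambda>n. \<Sum>i\<in>{i. p i \<noteq> 0}. p i * fsh i (q (n - i)))"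

definition qhom :: "int \<Rightarrow> 'k::field poly fract \<Rightarrow> 'k qel" where
  "qhom i g = (\<lambda>j. if j = i then g else 0)"

definition homog :: "int \<Rightarrow> 'k::field qel set" where
  "homog i = {q. \<forall>j. j \<noteq> i \<longrightarrow> q j = 0}"

text \<open>f = z(z+alpha); y = x^-1 f = sigma^-1(f) x^-1.\<close>
definition fpol :: "'k::field \<Rightarrow> 'k poly" where
  "fpol \<alpha> = [:0, 1:] * [:\<alpha>, 1:]"

definition qx :: "'k::field qel" where "qx = qhom 1 1"

definition qy :: "'k::field \<Rightarrow> 'k qel" where
  "qy \<alpha> = qhom (-1) (to_fract (psh (-1) (fpol \<alpha>)))"

text \<open>The algebra A = A(f), as the subring of Q_gr(A) generated by k[z], x and y.\<close>
inductive_set Aset :: "'k::field \<Rightarrow> 'k qel set" for \<alpha> :: 'k where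
  poly_in: "qhom 0 (to_fract h) \<in> Aset \<alpha>"
| x_in: "qx \<in> Aset \<alpha>"
| y_in: "qy \<alpha> \<in> Aset \<alpha>"
| add_in: "a \<in> Aset \<alpha> \<Longrightarrow> b \<in> Aset \<alpha> \<Longrightarrow> qadd a b \<in> Aset \<alpha>"
| mult_in: "a \<in> Aset \<alpha> \<Longrightarrow> b \<in> Aset \<alpha> \<Longrightarrow> qmult a b \<in> Aset \<alpha>"

definition right_submod :: "'k::field \<Rightarrow> 'k qel set \<Rightarrow> bool" where
  "right_submod \<alpha> I \<longleftrightarrow> I \<subseteq> Qgr \<and> qzero \<in> I \<and>
     (\<forall>p\<in>I. \<forall>q\<in>I. qadd p q \<in> I) \<and>
     (\<forall>p\<in>I. \<forall>a\<in>Aset \<alpha>. qmult p a \<in> I)"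

definition graded :: "'k::field qel set \<Rightarrow> bool" where
  "graded I \<longleftrightarrow> (\<forall>q\<in>I. \<forall>i. qhom i (q i) \<in> I)"

definition qsum :: "'k::field qel set \<Rightarrow> ('k qel \<Rightarrow> 'k qel) \<Rightarrow> 'k qel" where
  "qsum G h = (\<lambda>n. \<Sum>g\<in>G. h g n)"

definition fin_gen :: "'k::field \<Rightarrow> 'k qel set \<Rightarrow> bool" where
  "fin_gen \<alpha> I \<longleftrightarrow> (\<exists>G. finite G \<and> G \<subseteq> I \<and>
     I = {qsum G (\<lambda>g. qmult g (a g)) | a. \<forall>g\<in>G. a g \<in> Aset \<alpha>})"

definition fg_graded_submod :: "'k::field \<Rightarrow> 'k qel set \<Rightarrow> bool" where
  "fg_graded_submod \<alpha> I \<longleftrightarrow> right_submod \<alpha> I \<and> graded I \<and> fin_gen \<alpha> I"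

definition graded_iso :: "'k::field \<Rightarrow> 'k qel set \<Rightarrow> 'k qel set \<Rightarrow> bool" where
  "graded_iso \<alpha> I J \<longleftrightarrow> (\<exists>\<phi>. bij_betw \<phi> I J \<and>
     (\<forall>p\<in>I. \<forall>q\<in>I. \<phi> (qadd p q) = qadd (\<phi> p) (\<phi> q)) \<and>
     (\<forall>p\<in>I. \<forall>a\<in>Aset \<alpha>. \<phi> (qmult p a) = qmult (\<phi> p) a) \<and>
     (\<forall>p\<in>I. \<forall>i. p \<in> homog i \<longrightarrow> \<phi> p \<in> homog i))"

definition struct_consts :: "'k::field qel set \<Rightarrow> (int \<Rightarrow> 'k poly) \<Rightarrow> bool" where
  "struct_consts I c \<longleftrightarrow> (\<exists>a :: int \<Rightarrow> 'k poly fract.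
     (\<forall>i. a i \<noteq> 0 \<and> {g. qhom i g \<in> I} = {to_fract p * a i | p. True}) \<and>
     (\<forall>i. lead_coeff (c i) = 1 \<and>
          (\<exists>u::'k. u \<noteq> 0 \<and> to_fract (c i) = to_fract [:u:] * (a i / a (i + 1)))))"

end

theory Submission imports Defs begin

lemma psh_mult: "psh n (p * q) = psh n p * psh n q"
  by (simp add: psh_def pcompose_mult)

lemma psh_eq_0: "psh n (p::'k::field poly) = 0 \<longleftrightarrow> p = 0"
  by (simp add: psh_def pcompose_eq_0_iff)

lemma psh_psh: "psh n (psh m (p::'k::field poly)) = psh (n+m) p"
proof -
  have "pcompose [:of_int m, 1:] [:of_int n, (1::'k):] = [:of_int (n+m), 1:]"
    by (simp add: pcompose_pCons)
  then show ?thesis unfolding psh_def by (metis pcompose_assoc)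
qed

lemma psh_1: "psh n (1::'k::field poly) = 1"
  by (simp add: psh_def pcompose_1)

lemma fsh_to_fract: "fsh n (to_fract (h::'k::field poly)) = to_fract (psh n h)"
proof -
  let ?P = "\<lambda>pq. snd pq \<noteq> 0 \<and> to_fract h = Fract (fst pq) (snd pq)"
  have ex: "?P (h, 1)" by (simp add: Fract_conv_to_fract)
  define pq where "pq = (SOME pq. ?P pq)"
  have P: "?P pq" unfolding pq_def by (rule someI[of ?P, OF ex])
  then have q0: "snd pq \<noteq> 0" and e: "fst pq = h * snd pq"
    by (auto simp: eq_fract to_fract_def)
  have "fsh n (to_fract h) = Fract (psh n (fst pq)) (psh n (snd pq))"
    unfolding fsh_def pq_def Let_def by simp
  also have "\<dots> = to_fract (psh n h)"
    using q0 by (simp add: e psh_mult eq_fract to_fract_def psh_eq_0)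
  finally show ?thesis .
qed

lemma fsh_0: "fsh n (0::'k::field poly fract) = 0"
  using fsh_to_fract[of n "0::'k poly"] by (simp add: psh_def)

lemma qmult_qhom: "qmult (qhom i g) (qhom j (h::'k::field poly fract)) = qhom (i+j) (g * fsh i h)"
proof (cases "g = 0")
  case True then show ?thesis by (auto simp: qmult_def qhom_def)
next
  case False
  then have "{k. qhom i g k \<noteq> 0} = {i}" by (auto simp: qhom_def)
  then show ?thesis using False by (auto simp: qmult_def qhom_def fsh_0 fun_eq_iff)
qed

lemma fsh_1: "fsh n (1::'k::field poly fract) = 1"
  using fsh_to_fract[of n "1::'k poly"] by (simp add: psh_1)

lemma to_fract_const_div: "(y::'k::field) \<noteq> 0 \<Longrightarrow> to_fract [:x:] / to_fract [:y:] = to_fract [:x/y:]"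
  by (simp add: divide_eq_eq to_fract_mult[symmetric] del: to_fract_mult)

lemma qhom_zero: "qhom i 0 = qzero"
  by (auto simp: qhom_def qzero_def)

lemma qadd_split: "p = qadd (qhom x (p x)) (p(x := 0))"
  by (auto simp: qadd_def qhom_def)

lemma char_rev:
  assumes sub: "right_submod \<alpha> I"
  shows "finite S \<Longrightarrow> {i. p i \<noteq> 0} \<subseteq> S \<Longrightarrow> (\<forall>i. qhom i (p i) \<in> I) \<Longrightarrow> p \<in> I"
proof (induction S arbitrary: p rule: finite_induct)
  case empty
  then have "p = qzero" by (auto simp: qzero_def)
  then show ?case using sub by (simp add: right_submod_def)
next
  case (insert x S)
  have "p(x := 0) \<in> I"
    using insert.prems by (intro insert.IH) (auto simp: qhom_zero sub[unfolded right_submod_def])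
  moreover have "qhom x (p x) \<in> I" using insert.prems by auto
  ultimately show ?case using sub qadd_split[of p x] unfolding right_submod_def by metis
qed

lemma submod_char:
  assumes "right_submod \<alpha> I" "graded I"
  shows "p \<in> I \<longleftrightarrow> (finite {i. p i \<noteq> 0} \<and> (\<forall>i. qhom i (p i) \<in> I))"
  using assms char_rev[OF assms(1) _ order_refl, of p]
  by (auto simp: right_submod_def graded_def Qgr_def)

lemma phi_comp:
  assumes sub: "right_submod \<alpha> I" and gr: "graded I"
    and add: "\<forall>p\<in>I. \<forall>q\<in>I. \<phi> (qadd p q) = qadd (\<phi> p) (\<phi> q)"
    and hom: "\<forall>p\<in>I. \<forall>i. p \<in> homog i \<longrightarrow> \<phi> p \<in> homog i"
  shows "finite S \<Longrightarrow> {i. p i \<noteq> 0} \<subseteq> S \<Longrightarrow> p \<in> I \<Longrightarrow> \<phi> p i = \<phi> (qhom i (p i)) i"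
proof (induction S arbitrary: p rule: finite_induct)
  case empty
  then have "p = qzero" by (auto simp: qzero_def)
  then show ?case by (simp add: qhom_zero, simp add: qzero_def qhom_zero[unfolded qzero_def])
next
  case (insert x S)
  have z: "qzero \<in> I" using sub by (simp add: right_submod_def)
  have phi0: "\<phi> qzero = qzero"
  proof -
    have "qadd qzero qzero = qzero" by (simp add: qadd_def qzero_def)
    then have "\<phi> qzero = qadd (\<phi> qzero) (\<phi> qzero)" using add z by metis
    then have "\<And>n. \<phi> qzero n = \<phi> qzero n + \<phi> qzero n" by (metis qadd_def)
    then show ?thesis unfolding fun_eq_iff by (metis add_cancel_right_right qzero_def)
  qed
  have hx: "qhom x (p x) \<in> I" using insert.prems gr by (auto simp: graded_def)
  have f1: "finite {i. (p(x := 0)) i \<noteq> 0}"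
    by (rule finite_subset[of _ "insert x S"]) (use insert in auto)
  have f2: "\<forall>i. qhom i ((p(x := 0)) i) \<in> I"
    using insert.prems gr z by (auto simp: graded_def qhom_zero)
  have p'I: "p(x := 0) \<in> I"
    using f1 f2 submod_char[OF sub gr, of "p(x:=0)"] by blast
  have IH: "\<phi> (p(x := 0)) i = \<phi> (qhom i ((p(x := 0)) i)) i"
    by (rule insert.IH[OF _ p'I]) (use insert.prems in auto)
  have "\<phi> p = qadd (\<phi> (qhom x (p x))) (\<phi> (p(x := 0)))"
    using add hx p'I qadd_split[of p x] by metis
  then have e: "\<phi> p i = \<phi> (qhom x (p x)) i + \<phi> (p(x := 0)) i" by (simp add: qadd_def)
  show ?case
  proof (cases "x = i")
    case True
    then show ?thesis using e IH phi0 by (simp add: qhom_zero, simp add: qzero_def)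
  next
    case False
    have "qhom x (p x) \<in> homog x" by (simp add: homog_def qhom_def)
    then have "\<phi> (qhom x (p x)) i = 0" using hom hx False by (auto simp: homog_def)
    then show ?thesis using e IH False by simp
  qed
qed

lemma psh_0: "psh 0 p = p" by (simp add: psh_def)

lemma final_alg:
  fixes ai ai1 bi bi1 E :: "'k::field poly fract" and c d :: "'k poly"
  assumes nz: "ai1 \<noteq> 0" "bi1 \<noteq> 0" "u \<noteq> 0" "v \<noteq> 0" "t0 \<noteq> 0" "t1 \<noteq> 0"
    and e1: "ai = E * ai1"
    and e2: "to_fract [:t0:] * bi = to_fract [:t1:] * bi1 * E"
    and ec: "to_fract c = to_fract [:u:] * (ai / ai1)"
    and ed: "to_fract d = to_fract [:v:] * (bi / bi1)"
    and lc: "lead_coeff c = 1" "lead_coeff d = 1"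
  shows "c = d"
proof -
  have nz': "to_fract [:t0:] \<noteq> 0" "to_fract [:u:] \<noteq> 0" using nz by auto
  define F where "F = (to_fract :: 'k poly \<Rightarrow> 'k poly fract)"
  have c1: "F c = F [:u:] * E" using ec e1 nz unfolding F_def by simp
  have b1: "bi = F [:t1:] * bi1 * E / F [:t0:]" using e2 nz' unfolding F_def by (simp add: field_simps)
  have d1: "F d = F [:v:] * F [:t1:] * E / F [:t0:]" using ed b1 nz unfolding F_def by simp
  define K where "K = to_fract [:v * t1:] / to_fract [:t0 * u:]"
  have "F [:v * t1:] = F [:v:] * F [:t1:]" "F [:t0 * u:] = F [:t0:] * F [:u:]"
    unfolding F_def by (simp_all add: to_fract_mult[symmetric] del: to_fract_mult)
  then have "to_fract d = K * to_fract c"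
    unfolding K_def F_def[symmetric] c1 d1 using nz' unfolding F_def by (simp add: field_simps)
  also have "K = to_fract [:(v * t1) / (t0 * u):]" unfolding K_def using nz by (simp add: to_fract_const_div)
  finally have "d = [:(v * t1) / (t0 * u):] * c" by (simp add: to_fract_mult[symmetric] del: to_fract_mult)
  then have "d = smult ((v * t1) / (t0 * u)) c" by simp
  moreover then have "(v * t1) / (t0 * u) = 1"
  proof -
    assume "d = smult ((v * t1) / (t0 * u)) c"
    then have "lead_coeff d = ((v * t1) / (t0 * u)) * lead_coeff c" by (simp only: lead_coeff_smult)
    then show ?thesis using lc by simp
  qed
  ultimately show ?thesis by simp
qed

lemma qx_mult: "qmult (qhom i g) qx = qhom (i+1) (g::'k::field poly fract)"
  by (simp add: qx_def qmult_qhom fsh_1)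

lemma sc_mem:
  assumes "\<forall>i. {g. qhom i g \<in> I} = {to_fract p * a i |p. True}"
  shows "qhom i g \<in> I \<longleftrightarrow> (\<exists>p. g = to_fract p * a i)"
proof -
  have "g \<in> {g. qhom i g \<in> I} \<longleftrightarrow> g \<in> {to_fract p * a i |p. True}" using assms by simp
  then show ?thesis by auto
qed

lemma dir1:
  fixes \<alpha> :: "'k::field"
  assumes sI: "fg_graded_submod \<alpha> I" and sJ: "fg_graded_submod \<alpha> J"
    and cI: "struct_consts I c" and dJ: "struct_consts J d"
    and iso: "graded_iso \<alpha> I J"
  shows "c i = d i"
proof -
  have subI: "right_submod \<alpha> I" and grI: "graded I" using sI by (auto simp: fg_graded_submod_def)
  obtain \<phi> where bij: "bij_betw \<phi> I J"
    and add: "\<forall>p\<in>I. \<forall>q\<in>I. \<phi> (qadd p q) = qadd (\<phi> p) (\<phi> q)"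
    and linA: "\<forall>p\<in>I. \<forall>a\<in>Aset \<alpha>. \<phi> (qmult p a) = qmult (\<phi> p) a"
    and hom: "\<forall>p\<in>I. \<forall>i. p \<in> homog i \<longrightarrow> \<phi> p \<in> homog i"
    using iso unfolding graded_iso_def by blast
  obtain a where a_nz: "\<forall>i. a i \<noteq> 0" and aI: "\<forall>i. {g. qhom i g \<in> I} = {to_fract p * a i |p. True}"
    and ac: "\<forall>i. lead_coeff (c i) = 1 \<and> (\<exists>u::'k. u \<noteq> 0 \<and> to_fract (c i) = to_fract [:u:] * (a i / a (i + 1)))"
    using cI unfolding struct_consts_def by blast
  obtain b where b_nz: "\<forall>i. b i \<noteq> 0" and bJ: "\<forall>i. {g. qhom i g \<in> J} = {to_fract p * b i |p. True}"
    and bd: "\<forall>i. lead_coeff (d i) = 1 \<and> (\<exists>u::'k. u \<noteq> 0 \<and> to_fract (d i) = to_fract [:u:] * (b i / b (i + 1)))"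
    using dJ unfolding struct_consts_def by blast
  note inI = sc_mem[OF aI] and inJ = sc_mem[OF bJ]
  have hom_eq: "\<phi> (qhom i g) = qhom i (\<phi> (qhom i g) i)" if "qhom i g \<in> I" for i g
  proof -
    have "qhom i g \<in> homog i" by (simp add: homog_def qhom_def)
    then have "\<phi> (qhom i g) \<in> homog i" using hom that by blast
    then show ?thesis by (auto simp: homog_def qhom_def fun_eq_iff)
  qed
  have lin: "\<phi> (qhom i (g * to_fract r)) = qhom i (\<phi> (qhom i g) i * to_fract r)"
    if "qhom i g \<in> I" for i g r
  proof -
    have e: "qmult (qhom i h) (qhom 0 (to_fract (psh (-i) r))) = qhom i (h * to_fract r)" for h
      by (simp add: qmult_qhom fsh_to_fract psh_psh psh_0)
    have A: "qhom 0 (to_fract (psh (-i) r)) \<in> Aset \<alpha>" by (rule Aset.poly_in)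
    have "\<phi> (qhom i (g * to_fract r)) = qmult (\<phi> (qhom i g)) (qhom 0 (to_fract (psh (-i) r)))"
      using linA that A e[of g] by metis
    also have "\<dots> = qhom i (\<phi> (qhom i g) i * to_fract r)"
      using hom_eq[OF that] e by metis
    finally show ?thesis .
  qed
  define s where "s i = \<phi> (qhom i (a i)) i" for i
  have a_in: "qhom i (a i) \<in> I" for i using inI[of i "a i"] by (metis mult_1 to_fract_1)
  have s_eq: "\<phi> (qhom i (a i)) = qhom i (s i)" for i using hom_eq[OF a_in] s_def by simp
  have tau: "\<exists>\<tau>. \<tau> \<noteq> 0 \<and> s i = to_fract [:\<tau>:] * b i" for i
  proof -
    have "qhom i (s i) \<in> J" using s_eq[of i] a_in[of i] bij by (metis bij_betw_apply)
    then obtain t where t: "s i = to_fract t * b i" using inJ by blast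
    have "qhom i (b i) \<in> J" using inJ[of i "b i"] by (metis mult_1 to_fract_1)
    then have "qhom i (b i) \<in> \<phi> ` I" using bij by (simp add: bij_betw_def)
    then obtain w where wI: "w \<in> I" and w: "\<phi> w = qhom i (b i)" by (metis imageE)
    have fw: "finite {j. w j \<noteq> 0}" using wI subI by (auto simp: right_submod_def Qgr_def)
    have "\<phi> w i = \<phi> (qhom i (w i)) i"
      by (rule phi_comp[OF subI grI add hom fw order_refl wI])
    then have bw: "b i = \<phi> (qhom i (w i)) i" using w by (simp add: qhom_def)
    have "qhom i (w i) \<in> I" using grI wI by (simp add: graded_def)
    then obtain p where p: "w i = to_fract p * a i" using inI by blast
    have "\<phi> (qhom i (w i)) = qhom i (s i * to_fract p)"
      using lin[OF a_in, of i p] p s_def by (simp add: mult.commute)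
    then have "b i = s i * to_fract p" using bw by (simp add: qhom_def)
    then have "b i * to_fract (t * p) = b i * 1" using t by (simp add: algebra_simps)
    then have "to_fract (t * p) = to_fract 1" using b_nz by simp
    then have tp: "t * p = 1" by (simp only: to_fract_eq_iff)
    then have "t \<noteq> 0" "p \<noteq> 0" by auto
    then have "degree t = 0" using tp degree_mult_eq[of t p] by simp
    then obtain \<tau> where tt: "t = [:\<tau>:]" by (metis degree_eq_zeroE)
    then have "\<tau> \<noteq> 0" using \<open>t \<noteq> 0\<close> by auto
    then show ?thesis using t tt by blast
  qed
  obtain t0 where t0: "t0 \<noteq> 0" "s i = to_fract [:t0:] * b i" using tau by blast
  obtain t1 where t1: "t1 \<noteq> 0" "s (i+1) = to_fract [:t1:] * b (i+1)" using tau by blast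
  have q1: "qhom (i+1) (a i) \<in> I"
    using subI a_in[of i] qx_mult[of i "a i"] Aset.x_in unfolding right_submod_def by metis
  then obtain e where e: "a i = to_fract e * a (i+1)" using inI by blast
  have "\<phi> (qhom (i+1) (a i)) = qhom (i+1) (s i)"
    using linA a_in[of i] Aset.x_in s_eq[of i] qx_mult by metis
  moreover have "\<phi> (qhom (i+1) (a i)) = qhom (i+1) (s (i+1) * to_fract e)"
    using lin[OF a_in, of "i+1" e] e s_def by (simp add: mult.commute)
  ultimately have se: "s i = s (i+1) * to_fract e" by (metis qhom_def)
  obtain u where u: "u \<noteq> 0" "to_fract (c i) = to_fract [:u:] * (a i / a (i + 1))" using ac by blast
  obtain v where v: "v \<noteq> 0" "to_fract (d i) = to_fract [:v:] * (b i / b (i + 1))" using bd by blast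
  show ?thesis
  proof (rule final_alg[of "a (i+1)" "b (i+1)" u v t0 t1 "a i" "to_fract e" "b i"])
    show "to_fract [:t0:] * b i = to_fract [:t1:] * b (i + 1) * to_fract e"
      using se t0 t1 by simp
  qed (use a_nz b_nz u v t0 t1 e ac bd in auto)
qed

lemma inv_const: "(l::'k::field) \<noteq> 0 \<Longrightarrow> to_fract [:1/l:] * to_fract [:l:] = 1"
proof -
  assume "l \<noteq> 0"
  then have "[:1/l:] * [:l:] = (1::'k poly)" by (simp add: one_pCons)
  then show ?thesis by (metis to_fract_mult to_fract_1)
qed

lemma const_mult: "to_fract [:x:] * to_fract [:y:] = to_fract [:x * (y::'k::field):]"
  by (simp add: to_fract_mult[symmetric] del: to_fract_mult)

lemma dir2:
  fixes \<alpha> :: "'k::field"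
  assumes sI: "fg_graded_submod \<alpha> I" and sJ: "fg_graded_submod \<alpha> J"
    and cI: "struct_consts I c" and dJ: "struct_consts J d"
    and cd: "\<forall>i. c i = d i"
  shows "graded_iso \<alpha> I J"
proof -
  have subI: "right_submod \<alpha> I" and grI: "graded I" using sI by (auto simp: fg_graded_submod_def)
  have subJ: "right_submod \<alpha> J" and grJ: "graded J" using sJ by (auto simp: fg_graded_submod_def)
  obtain a where a_nz: "\<forall>i. a i \<noteq> 0" and aI: "\<forall>i. {g. qhom i g \<in> I} = {to_fract p * a i |p. True}"
    and ac: "\<forall>i. lead_coeff (c i) = 1 \<and> (\<exists>u::'k. u \<noteq> 0 \<and> to_fract (c i) = to_fract [:u:] * (a i / a (i + 1)))"
    using cI unfolding struct_consts_def by blast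
  obtain b where b_nz: "\<forall>i. b i \<noteq> 0" and bJ: "\<forall>i. {g. qhom i g \<in> J} = {to_fract p * b i |p. True}"
    and bd: "\<forall>i. lead_coeff (d i) = 1 \<and> (\<exists>u::'k. u \<noteq> 0 \<and> to_fract (d i) = to_fract [:u:] * (b i / b (i + 1)))"
    using dJ unfolding struct_consts_def by blast
  note inI = sc_mem[OF aI] and inJ = sc_mem[OF bJ]
  have step: "\<exists>\<kappa>. \<kappa> \<noteq> 0 \<and> b (i+1) / a (i+1) = to_fract [:\<kappa>:] * (b i / a i)" for i
  proof -
    obtain u where u: "u \<noteq> 0" "to_fract (c i) = to_fract [:u:] * (a i / a (i + 1))" using ac by blast
    obtain v where v: "v \<noteq> 0" "to_fract (d i) = to_fract [:v:] * (b i / b (i + 1))" using bd by blast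
    have e: "to_fract [:u:] * (a i / a (i + 1)) = to_fract [:v:] * (b i / b (i + 1))"
      using u v cd by simp
    have nz: "to_fract [:u:] \<noteq> 0" "a i \<noteq> 0" "a (i+1) \<noteq> 0" "b i \<noteq> 0" "b (i+1) \<noteq> 0"
      using u a_nz b_nz by auto
    have "b (i+1) / a (i+1) = to_fract [:v:] / to_fract [:u:] * (b i / a i)"
      using e nz by (simp add: field_simps)
    also have "to_fract [:v:] / to_fract [:u:] = to_fract [:v/u:]" using u by (simp add: to_fract_const_div)
    finally have "b (i+1) / a (i+1) = to_fract [:v/u:] * (b i / a i)" .
    moreover have "v/u \<noteq> 0" using u v by simp
    ultimately show ?thesis by blast
  qed
  have lam: "\<exists>l. l \<noteq> 0 \<and> b i / a i = to_fract [:l:] * (b 0 / a 0)" for i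
  proof (induction i rule: int_induct[where k=0])
    case base
    show ?case by (rule exI[of _ 1]) (simp add: one_pCons[symmetric])
  next
    case (step1 i)
    then obtain l where l: "l \<noteq> 0" "b i / a i = to_fract [:l:] * (b 0 / a 0)" by blast
    obtain k where k: "k \<noteq> 0" "b (i+1) / a (i+1) = to_fract [:k:] * (b i / a i)" using step by blast
    have "b (i+1) / a (i+1) = to_fract [:k * l:] * (b 0 / a 0)"
      using k l by (simp add: const_mult[symmetric] mult.assoc)
    moreover have "k * l \<noteq> 0" using k l by simp
    ultimately show ?case by blast
  next
    case (step2 i)
    then obtain l where l: "l \<noteq> 0" "b i / a i = to_fract [:l:] * (b 0 / a 0)" by blast
    obtain k where k: "k \<noteq> 0" "b (i-1+1) / a (i-1+1) = to_fract [:k:] * (b (i-1) / a (i-1))" using step by blast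
    have kz: "to_fract [:k:] \<noteq> 0" using k by simp
    have "b (i-1) / a (i-1) = to_fract [:l:] / to_fract [:k:] * (b 0 / a 0)"
      using k l kz by (simp add: field_simps)
    also have "to_fract [:l:] / to_fract [:k:] = to_fract [:l/k:]" using k by (simp add: to_fract_const_div)
    finally have "b (i-1) / a (i-1) = to_fract [:l/k:] * (b 0 / a 0)" .
    moreover have "l / k \<noteq> 0" using k l by simp
    ultimately show ?case by blast
  qed
  define Q where "Q = b 0 / a 0"
  have Qnz: "Q \<noteq> 0" using a_nz b_nz by (simp add: Q_def)
  have key: "qhom i (Q * h) \<in> J \<longleftrightarrow> qhom i h \<in> I" for i h
  proof -
    obtain l where l: "l \<noteq> 0" "b i / a i = to_fract [:l:] * Q" using lam Q_def by blast
    have bi: "b i = to_fract [:l:] * Q * a i" using l a_nz by (simp add: field_simps)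
    show ?thesis
    proof
      assume "qhom i (Q * h) \<in> J"
      then obtain p where "Q * h = to_fract p * b i" using inJ by blast
      then have "Q * h = Q * (to_fract p * to_fract [:l:] * a i)" using bi by (simp add: algebra_simps)
      then have "h = to_fract p * to_fract [:l:] * a i" using Qnz by simp
      then have "h = to_fract (p * [:l:]) * a i" by (simp only: to_fract_mult)
      then show "qhom i h \<in> I" using inI by blast
    next
      assume "qhom i h \<in> I"
      then obtain p where p: "h = to_fract p * a i" using inI by blast
      have "Q * h = to_fract p * (to_fract [:1/l:] * to_fract [:l:]) * Q * a i"
        using inv_const[OF l(1)] p by (simp add: algebra_simps)
      also have "\<dots> = to_fract p * to_fract [:1/l:] * b i" using bi by (simp add: algebra_simps)
      also have "\<dots> = to_fract (p * [:1/l:]) * b i" by (simp only: to_fract_mult)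
      finally show "qhom i (Q * h) \<in> J" using inJ by blast
    qed
  qed
  define \<phi> where "\<phi> p = (\<lambda>n. Q * p n)" for p :: "'k qel"
  have supp: "{i. \<phi> p i \<noteq> 0} = {i. p i \<noteq> 0}" for p using Qnz by (simp add: \<phi>_def)
  have qh: "qhom i (\<phi> p i) = qhom i (Q * p i)" for p i by (simp add: \<phi>_def)
  have mapI: "\<phi> p \<in> J \<longleftrightarrow> p \<in> I" for p
    unfolding submod_char[OF subI grI, of p] submod_char[OF subJ grJ, of "\<phi> p"] supp qh key ..
  have bij: "bij_betw \<phi> I J"
  proof (rule bij_betw_imageI)
    show "inj_on \<phi> I"
    proof
      fix p q assume "\<phi> p = \<phi> q"
      then have "\<And>n. Q * p n = Q * q n" by (metis \<phi>_def)
      then show "p = q" using Qnz by (simp add: fun_eq_iff)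
    qed
    show "\<phi> ` I = J"
    proof
      show "\<phi> ` I \<subseteq> J" using mapI by blast
      show "J \<subseteq> \<phi> ` I"
      proof
        fix q assume qJ: "q \<in> J"
        have e: "q = \<phi> (\<lambda>n. q n / Q)" using Qnz by (simp add: \<phi>_def)
        then have "(\<lambda>n. q n / Q) \<in> I" using mapI qJ by metis
        then show "q \<in> \<phi> ` I" using e by blast
      qed
    qed
  qed
  have addp: "\<phi> (qadd p q) = qadd (\<phi> p) (\<phi> q)" for p q
    by (simp add: \<phi>_def qadd_def distrib_left)
  have multp: "\<phi> (qmult p r) = qmult (\<phi> p) r" for p r
    unfolding qmult_def supp by (simp add: \<phi>_def sum_distrib_left mult.assoc)
  have homp: "p \<in> homog i \<Longrightarrow> \<phi> p \<in> homog i" for p i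
    by (simp add: homog_def \<phi>_def)
  show ?thesis unfolding graded_iso_def
    using bij addp multp homp by blast
qed

theorem lemma3p4:
  fixes \<alpha> :: "'k::field_char_0"
    and I J :: "'k qel set"
    and c d :: "int \<Rightarrow> 'k poly"
  assumes "alg_closed TYPE('k)"
    and "fg_graded_submod \<alpha> I" and "fg_graded_submod \<alpha> J"
    and "struct_consts I c" and "struct_consts J d"
  shows "graded_iso \<alpha> I J \<longleftrightarrow> (\<forall>i. c i = d i)"
  using dir1[OF assms(2-5)] dir2[OF assms(2-5)] by blast

end
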